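(* Let $f(x):=x^n+a_1x^{n-1}+a_2x^{n-2}+\cdots+a_n$ be a real polynomial, and set $a_0:=1$. Suppose $f$ has (counting multiplicities) $n_+$ roots with positive real part, $n_-$ roots with negative real part and $n_0<n$ purely imaginary roots (roots with zero real part), so $n_++n_-+n_0=n$. Let \[ P(x):=\sum_{j\ge 0,\ 2j\le n}(-1)^j a_{2j}\,x^{n-2j}=x^n-a_2x^{n-2}+a_4x^{n-4}-\cdots, \] \[ Q(x):=\sum_{j\ge 0,\ 2j+1\le n}(-1)^j a_{2j+1}\,x^{n-2j-1}=a_1x^{n-1}-a_3x^{n-3}+a_5x^{n-5}-\cdots, \] and $d:=n-2\min(n_+,n_-)$. Then, counting multiplicities, there exist at least $d$ real roots $\mu_1,\ldots,\mu_d$ of $P$ and at least $d-1$ real roots $\nu_1,\ldots,\nu_{d-1}$ of $Q$ such that \[ \mu_1\le\nu_1\le\mu_2\le\nu_2\le\cdots\le\nu_{d-1}\le\mu_d . \] If $n_0=0$, then these inequalities may be taken to be strict.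
   Context: "Counting multiplicities" means that a root of multiplicity $m$ may appear up to $m$ times in the respective list. *)

theory Defs
  imports "HOL-Computational_Algebra.Polynomial" "HOL-Library.Multiset" Complex_Main
begin

definition roots_count :: "(real \<Rightarrow> bool) \<Rightarrow> real poly \<Rightarrow> nat" where
  "roots_count R f =
     (\<Sum>z\<in>{z. poly (map_poly complex_of_real f) z = 0 \<and> R (Re z)}.
        order z (map_poly complex_of_real f))"

abbreviation n_pos :: "real poly \<Rightarrow> nat" where "n_pos f \<equiv> roots_count (\<lambda>r. r > 0) f"
abbreviation n_neg :: "real poly \<Rightarrow> nat" where "n_neg f \<equiv> roots_count (\<lambda>r. r < 0) f"
abbreviation n_zero :: "real poly \<Rightarrow> nat" where "n_zero f \<equiv> roots_count (\<lambda>r. r = 0) f"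

text \<open>With \<open>a_j = coeff f (n - j)\<close>, \<open>n = degree f\<close>:
  \<open>P x = \<Sum>_{2j\<le>n} (-1)^j a_{2j} x^{n-2j}\<close>, \<open>Q x = \<Sum>_{2j+1\<le>n} (-1)^j a_{2j+1} x^{n-2j-1}\<close>.\<close>
definition P_poly :: "real poly \<Rightarrow> real poly" where
  "P_poly f = (let n = degree f in
     (\<Sum>j\<in>{j. 2*j \<le> n}. monom ((-1)^j * coeff f (n - 2*j)) (n - 2*j)))"

definition Q_poly :: "real poly \<Rightarrow> real poly" where
  "Q_poly f = (let n = degree f in
     (\<Sum>j\<in>{j. 2*j + 1 \<le> n}. monom ((-1)^j * coeff f (n - 2*j - 1)) (n - 2*j - 1)))"

text \<open>The list \<open>xs\<close> consists of roots of \<open>p\<close>, counted with multiplicity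
  (for the zero polynomial every real number is a root of arbitrary multiplicity).\<close>
definition roots_with_mult :: "real list \<Rightarrow> real poly \<Rightarrow> bool" where
  "roots_with_mult xs p \<longleftrightarrow> p = 0 \<or> (\<forall>x. count (mset xs) x \<le> order x p)"

end

theory Submission imports Defs "HOL-Computational_Algebra.Fundamental_Theorem_Algebra" begin

fun evs :: "'a list \<Rightarrow> 'a list" and ods :: "'a list \<Rightarrow> 'a list" where
  "evs [] = []" | "evs (x # xs) = x # ods xs"
| "ods [] = []" | "ods (x # xs) = evs xs"

lemma evs_ods_ins:
  "mset (evs (A @ t # t # B)) = mset (evs (A @ B)) + {#t#} \<and>
   mset (ods (A @ t # t # B)) = mset (ods (A @ B)) + {#t#}"
  by (induction A) auto

lemma evs_ods_length: "length (evs L) = (length L + 1) div 2 \<and> length (ods L) = length L div 2"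
  by (induction L) auto

lemma evs_ods_nth: "(\<forall>i < length (evs L). evs L ! i = L ! (2*i)) \<and> (\<forall>i < length (ods L). ods L ! i = L ! (2*i+1))"
proof (induction L)
  case Nil then show ?case by simp
next
  case (Cons x L)
  show ?case
  proof (intro conjI allI impI)
    fix i assume "i < length (evs (x#L))"
    then show "evs (x # L) ! i = (x # L) ! (2 * i)" using Cons
      by (cases i) auto
  next
    fix i assume "i < length (ods (x#L))"
    then show "ods (x # L) ! i = (x # L) ! (2 * i + 1)" using Cons
      by (cases i) auto
  qed
qed

lemma evs_ods_distinct: "distinct L \<Longrightarrow> distinct (evs L) \<and> distinct (ods L)"
proof (induction L)
  case (Cons x L)
  have "set (ods L) \<subseteq> set L \<and> set (evs L) \<subseteq> set L"
    by (induction L) auto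
  with Cons show ?case by auto
qed simp

definition ins2 :: "real \<Rightarrow> real list \<Rightarrow> real list" where
  "ins2 t L = takeWhile (\<lambda>y. y < t) L @ t # t # dropWhile (\<lambda>y. y < t) L"

lemma ins2_props:
  assumes "sorted L"
  shows "sorted (ins2 t L) \<and> length (ins2 t L) = length L + 2 \<and>
     mset (evs (ins2 t L)) = mset (evs L) + {#t#} \<and> mset (ods (ins2 t L)) = mset (ods L) + {#t#}"
proof -
  have e: "L = takeWhile (\<lambda>y. y < t) L @ dropWhile (\<lambda>y. y < t) L" by simp
  have s1: "\<forall>y\<in>set (takeWhile (\<lambda>y. y < t) L). y < t"
    by (meson set_takeWhileD)
  have s2: "\<forall>y\<in>set (dropWhile (\<lambda>y. y < t) L). t \<le> y"
  proof (cases "dropWhile (\<lambda>y. y < t) L")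
    case (Cons h r)
    have "\<not> h < t" using hd_dropWhile[of "\<lambda>y. y < t" L] Cons by simp
    moreover have "sorted (h # r)" using sorted_dropWhile[OF assms] Cons by metis
    ultimately show ?thesis using Cons by auto
  next
    case Nil show ?thesis unfolding Nil by simp
  qed
  have "sorted (ins2 t L)"
  proof -
    have a: "sorted (takeWhile (\<lambda>y. y < t) L)" using sorted_takeWhile[OF assms] .
    have b: "sorted (t # t # dropWhile (\<lambda>y. y < t) L)"
      using sorted_dropWhile[OF assms] s2 by simp
    have c: "\<forall>x\<in>set (takeWhile (\<lambda>y. y < t) L). \<forall>y\<in>set (t # t # dropWhile (\<lambda>y. y < t) L). x \<le> y"
    proof (intro ballI)
      fix x y assume x: "x \<in> set (takeWhile (\<lambda>y. y < t) L)" and y: "y \<in> set (t # t # dropWhile (\<lambda>y. y < t) L)"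
      have "x < t" using s1 x by blast
      moreover have "t \<le> y" using s2 y by auto
      ultimately show "x \<le> y" by linarith
    qed
    show ?thesis unfolding ins2_def sorted_append using a b c by blast
  qed
  moreover have "length (ins2 t L) = length L + 2"
    unfolding ins2_def by (subst (3) e, simp del: takeWhile_dropWhile_id)
  moreover have "mset (evs (ins2 t L)) = mset (evs L) + {#t#} \<and> mset (ods (ins2 t L)) = mset (ods L) + {#t#}"
    unfolding ins2_def using evs_ods_ins[of "takeWhile (\<lambda>y. y < t) L" t "dropWhile (\<lambda>y. y < t) L"]
    by simp
  ultimately show ?thesis by blast
qed

lemma fold_ins2:
  assumes "sorted L0"
  shows "sorted (fold ins2 ts L0) \<and> length (fold ins2 ts L0) = length L0 + 2 * length ts \<and>
     mset (evs (fold ins2 ts L0)) = mset (evs L0) + mset ts \<and>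
     mset (ods (fold ins2 ts L0)) = mset (ods L0) + mset ts"
  using assms
proof (induction ts arbitrary: L0)
  case Nil then show ?case by simp
next
  case (Cons t ts)
  from ins2_props[OF Cons.prems, of t] Cons.IH[of "ins2 t L0"] show ?case
    by (simp add: add.commute add.left_commute)
qed

lemma chain_ivt:
  fixes \<Phi> :: "real \<Rightarrow> real"
  assumes cont: "continuous_on UNIV \<Phi>" and "sorted_wrt (<) cs"
    and "\<forall>c\<in>set cs. \<Phi> a < c \<and> c < \<Phi> b" and "a < b"
  shows "\<exists>xs. length xs = length cs \<and> sorted_wrt (<) xs \<and> (\<forall>x\<in>set xs. a < x) \<and>
           (\<forall>j<length cs. \<Phi> (xs!j) = cs!j)"
  using assms(2-)
proof (induction cs arbitrary: a)
  case Nil then show ?case by simp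
next
  case (Cons c cs)
  have c1: "\<Phi> a < c" "c < \<Phi> b" using Cons.prems by auto
  obtain x where x: "a \<le> x" "x \<le> b" "\<Phi> x = c"
    using IVT'[of \<Phi> a c b] c1 Cons.prems(3) continuous_on_subset[OF cont] by force
  have xa: "a < x" using x c1 by (metis order.order_iff_strict order_less_irrefl)
  have xb: "x < b" using x c1 by (metis order.order_iff_strict order_less_irrefl)
  have "\<forall>c'\<in>set cs. \<Phi> x < c' \<and> c' < \<Phi> b" using Cons.prems x by auto
  moreover have "sorted_wrt (<) cs" using Cons.prems by simp
  ultimately obtain xs where xs: "length xs = length cs" "sorted_wrt (<) xs" "\<forall>y\<in>set xs. x < y"
     "\<forall>j<length cs. \<Phi> (xs!j) = cs!j"
    using Cons.IH[of x] xb by blast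
  show ?case
  proof (intro exI[of _ "x # xs"] conjI)
    show "\<forall>j<length (c # cs). \<Phi> ((x # xs) ! j) = (c # cs) ! j"
    proof (intro allI impI)
      fix j assume "j < length (c # cs)"
      then show "\<Phi> ((x # xs) ! j) = (c # cs) ! j" using xs x by (cases j) auto
    qed
  qed (use xs xa in auto)
qed

definition theta :: "complex \<Rightarrow> real \<Rightarrow> real" where
  "theta z x = arctan ((x - Re z) / Im z) - sgn (Im z) * pi / 2"

lemma theta_polar:
  assumes "Im z \<noteq> 0"
  shows "complex_of_real x - z = complex_of_real (cmod (complex_of_real x - z)) * cis (theta z x)"
proof -
  define a b where "a = Re z" and "b = Im z"
  define t where "t = (x - a) / b"
  have b0: "b \<noteq> 0" using assms b_def by simp
  have sq: "sqrt (1 + t\<^sup>2) > 0" by (simp add: add_pos_nonneg)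
  have cm: "cmod (complex_of_real x - z) = \<bar>b\<bar> * sqrt (1 + t\<^sup>2)"
  proof -
    have "cmod (complex_of_real x - z) = sqrt ((x - a)\<^sup>2 + b\<^sup>2)"
      unfolding cmod_def a_def b_def by simp
    also have "(x - a)\<^sup>2 + b\<^sup>2 = b\<^sup>2 * (1 + t\<^sup>2)"
      unfolding t_def using b0 by (simp add: field_simps power2_eq_square)
    also have "sqrt \<dots> = \<bar>b\<bar> * sqrt (1 + t\<^sup>2)" by (simp add: real_sqrt_mult)
    finally show ?thesis .
  qed
  have xa: "x - a = b * t" unfolding t_def using b0 by simp
  show ?thesis
  proof (cases "b > 0")
    case True
    have th: "theta z x = arctan t - pi/2" unfolding theta_def t_def a_def b_def using True b_def by simp
    have c: "cos (theta z x) = t / sqrt (1 + t\<^sup>2)" unfolding th by (simp add: cos_diff sin_arctan)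
    have s: "sin (theta z x) = - (1 / sqrt (1 + t\<^sup>2))" unfolding th by (simp add: sin_diff cos_arctan)
    show ?thesis
      using True sq unfolding complex_eq_iff cm
      by (simp add: c s a_def[symmetric] b_def[symmetric] xa cis.sel)
  next
    case False
    then have bn: "b < 0" using b0 by simp
    have th: "theta z x = arctan t + pi/2" unfolding theta_def t_def a_def b_def using bn b_def by simp
    have c: "cos (theta z x) = - (t / sqrt (1 + t\<^sup>2))" unfolding th by (simp add: cos_add sin_arctan)
    have s: "sin (theta z x) = 1 / sqrt (1 + t\<^sup>2)" unfolding th by (simp add: sin_add cos_arctan)
    show ?thesis
      using bn sq unfolding complex_eq_iff cm
      by (simp add: c s a_def[symmetric] b_def[symmetric] xa cis.sel)
  qed
qed

lemma prod_polar:
  assumes "\<forall>z\<in>#Z. Im z \<noteq> 0"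
  shows "(\<Prod>z\<in>#Z. (complex_of_real x - z)) =
     complex_of_real (\<Prod>z\<in>#Z. cmod (complex_of_real x - z)) * cis (\<Sum>z\<in>#Z. theta z x)"
  using assms
proof (induction Z)
  case empty then show ?case by simp
next
  case (add z Z)
  have "(\<Prod>w\<in>#add_mset z Z. (complex_of_real x - w)) = (complex_of_real x - z) * (\<Prod>w\<in>#Z. (complex_of_real x - w))"
    by simp
  also have "\<dots> = (complex_of_real (cmod (complex_of_real x - z)) * cis (theta z x)) *
      (complex_of_real (\<Prod>z\<in>#Z. cmod (complex_of_real x - z)) * cis (\<Sum>z\<in>#Z. theta z x))"
    using add theta_polar[of z x] by simp
  also have "\<dots> = complex_of_real (\<Prod>w\<in>#add_mset z Z. cmod (complex_of_real x - w)) * cis (\<Sum>w\<in>#add_mset z Z. theta w x)"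
    by (simp add: cis_mult[symmetric] mult_ac)
  finally show ?case .
qed

lemma rho_pos:
  assumes "\<forall>z\<in>#Z. Im z \<noteq> 0"
  shows "(\<Prod>z\<in>#Z. cmod (complex_of_real x - z)) > 0"
  using assms
proof (induction Z)
  case empty then show ?case by simp
next
  case (add z Z)
  have "complex_of_real x - z \<noteq> 0" using add.prems by (auto simp: complex_eq_iff)
  then show ?case using add by simp
qed

lemma Theta_cont: "continuous_on UNIV (\<lambda>x. \<Sum>z\<in>#Z. theta z x)"
proof (induction Z)
  case empty then show ?case by simp
next
  case (add z Z)
  have "continuous_on UNIV (theta z)"
  proof (cases "Im z = 0")
    case True then show ?thesis unfolding theta_def by simp
  next
    case False then show ?thesis unfolding theta_def by (intro continuous_intros) auto
  qed
  with add show ?case by (simp add: continuous_on_add)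
qed

lemma theta_lim:
  assumes "Im z \<noteq> 0"
  shows "((theta z) \<longlongrightarrow> 0) at_top \<and> ((theta z) \<longlongrightarrow> - sgn (Im z) * pi) at_bot"
proof -
  define a b where "a = Re z" and "b = Im z"
  have th: "theta z = (\<lambda>x. arctan ((x - a) / b) - sgn b * pi / 2)"
    unfolding theta_def a_def b_def by auto
  show ?thesis
  proof (cases "b > 0")
    case True
    have l1: "filterlim (\<lambda>x. (x - a) / b) at_top at_top"
      unfolding filterlim_at_top eventually_at_top_linorder
    proof
      fix Z show "\<exists>N. \<forall>x\<ge>N. Z \<le> (x - a) / b"
        using True by (intro exI[of _ "Z * b + a"]) (auto simp: pos_le_divide_eq)
    qed
    have l2: "filterlim (\<lambda>x. (x - a) / b) at_bot at_bot"
      unfolding filterlim_at_bot eventually_at_bot_linorder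
    proof
      fix Z show "\<exists>N. \<forall>x\<le>N. (x - a) / b \<le> Z"
        using True by (intro exI[of _ "Z * b + a"]) (auto simp: pos_divide_le_eq)
    qed
    have "((\<lambda>x. arctan ((x - a) / b) - sgn b * pi / 2) \<longlongrightarrow> pi/2 - pi/2) at_top"
      using True by (intro tendsto_diff filterlim_compose[OF tendsto_arctan_at_top l1]) auto
    moreover have "((\<lambda>x. arctan ((x - a) / b) - sgn b * pi / 2) \<longlongrightarrow> -(pi/2) - pi/2) at_bot"
      using True by (intro tendsto_diff filterlim_compose[OF tendsto_arctan_at_bot l2]) auto
    ultimately show ?thesis using True unfolding th b_def[symmetric] by simp
  next
    case False
    then have bn: "b < 0" using assms b_def by simp
    have l1: "filterlim (\<lambda>x. (x - a) / b) at_bot at_top"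
      unfolding filterlim_at_bot eventually_at_top_linorder
    proof
      fix Z show "\<exists>N. \<forall>x\<ge>N. (x - a) / b \<le> Z"
        using bn by (intro exI[of _ "Z * b + a"]) (auto simp: neg_divide_le_eq)
    qed
    have l2: "filterlim (\<lambda>x. (x - a) / b) at_top at_bot"
      unfolding filterlim_at_top eventually_at_bot_linorder
    proof
      fix Z show "\<exists>N. \<forall>x\<le>N. Z \<le> (x - a) / b"
        using bn by (intro exI[of _ "Z * b + a"]) (auto simp: neg_le_divide_eq)
    qed
    have "((\<lambda>x. arctan ((x - a) / b) - sgn b * pi / 2) \<longlongrightarrow> -(pi/2) - (-1) * pi/2) at_top"
      using bn by (intro tendsto_diff filterlim_compose[OF tendsto_arctan_at_bot l1]) auto
    moreover have "((\<lambda>x. arctan ((x - a) / b) - sgn b * pi / 2) \<longlongrightarrow> pi/2 - (-1) * pi/2) at_bot"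
      using bn by (intro tendsto_diff filterlim_compose[OF tendsto_arctan_at_top l2]) auto
    ultimately show ?thesis using bn unfolding th b_def[symmetric] by simp
  qed
qed

lemma Theta_lim:
  assumes "\<forall>z\<in>#Z. Im z \<noteq> 0"
  shows "((\<lambda>x. \<Sum>z\<in>#Z. theta z x) \<longlongrightarrow> 0) at_top \<and>
         ((\<lambda>x. \<Sum>z\<in>#Z. theta z x) \<longlongrightarrow> (\<Sum>z\<in>#Z. - sgn (Im z) * pi)) at_bot"
  using assms
proof (induction Z)
  case empty then show ?case by simp
next
  case (add z Z)
  then have "((\<lambda>x. theta z x + (\<Sum>z\<in>#Z. theta z x)) \<longlongrightarrow> 0 + 0) at_top \<and>
         ((\<lambda>x. theta z x + (\<Sum>z\<in>#Z. theta z x)) \<longlongrightarrow> - sgn (Im z) * pi + (\<Sum>z\<in>#Z. - sgn (Im z) * pi)) at_bot"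
    using theta_lim[of z] by (intro conjI tendsto_add) auto
  then show ?case by simp
qed

lemma sgn_sum:
  assumes "\<forall>z\<in>#Z. Im z \<noteq> 0"
  shows "(\<Sum>z\<in>#Z. - sgn (Im z) * pi) =
     (real (size (filter_mset (\<lambda>z. Im z < 0) Z)) - real (size (filter_mset (\<lambda>z. Im z > 0) Z))) * pi"
  using assms
proof (induction Z)
  case empty then show ?case by simp
next
  case (add z Z)
  then show ?case
    by (cases "Im z > 0") (auto simp: algebra_simps)
qed

lemma core:
  assumes nz: "\<forall>z\<in>#Z. Im z \<noteq> 0"
    and kdef: "k = size (filter_mset (\<lambda>z. Im z > 0) Z)"
    and mdef: "m = size (filter_mset (\<lambda>z. Im z < 0) Z)"
    and Ddef: "D = (if m \<le> k then k - m else m - k)" and D1: "D \<ge> 1"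
  shows "\<exists>L::real list. length L = 2*D - 1 \<and> sorted_wrt (<) L \<and>
     (\<forall>i<length L. (even i \<longrightarrow> Re (\<Prod>z\<in>#Z. (complex_of_real (L!i) - z)) = 0) \<and>
                   (odd i \<longrightarrow> Im (\<Prod>z\<in>#Z. (complex_of_real (L!i) - z)) = 0))"
proof -
  define s :: real where "s = (if m \<le> k then 1 else -1)"
  define Th where "Th = (\<lambda>x. \<Sum>z\<in>#Z. theta z x)"
  define \<Phi> where "\<Phi> = (\<lambda>x. s * Th x)"
  have ss: "s * s = 1" unfolding s_def by simp
  have ThP: "Th = (\<lambda>x. s * \<Phi> x)" unfolding \<Phi>_def using ss by (auto simp: mult.assoc[symmetric])
  have lims: "(Th \<longlongrightarrow> 0) at_top" "(Th \<longlongrightarrow> (real m - real k) * pi) at_bot"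
    using Theta_lim[OF nz] sgn_sum[OF nz] unfolding Th_def kdef mdef by auto
  have sD: "s * ((real m - real k) * pi) = - (real D * pi)"
    unfolding s_def Ddef by (auto simp: of_nat_diff algebra_simps)
  have l1: "(\<Phi> \<longlongrightarrow> 0) at_top"
    unfolding \<Phi>_def using tendsto_mult_left[OF lims(1), of s] by simp
  have l2: "(\<Phi> \<longlongrightarrow> - (real D * pi)) at_bot"
    unfolding \<Phi>_def using tendsto_mult_left[OF lims(2), of s] sD by simp
  have "eventually (\<lambda>x. - (pi/4) < \<Phi> x) at_top"
    using order_tendstoD(1)[OF l1] pi_gt_zero by simp
  then obtain X where X: "\<And>x. x \<ge> X \<Longrightarrow> - (pi/4) < \<Phi> x" unfolding eventually_at_top_linorder by blast
  have "eventually (\<lambda>x. \<Phi> x < - (real D * pi) + pi/4) at_bot"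
    using order_tendstoD(2)[OF l2] pi_gt_zero by simp
  then obtain Y where Y: "\<And>x. x \<le> Y \<Longrightarrow> \<Phi> x < - (real D * pi) + pi/4" unfolding eventually_at_bot_linorder by blast
  define a0 where "a0 = min X Y - 1"
  define b0 where "b0 = max X Y + 1"
  have a0b0: "a0 < b0" unfolding a0_def b0_def by simp
  have Pa: "\<Phi> a0 < - (real D * pi) + pi/4" using Y unfolding a0_def by simp
  have Pb: "- (pi/4) < \<Phi> b0" using X unfolding b0_def by simp
  define cs where "cs = map (\<lambda>j. (real j + 1 - 2 * real D) * pi / 2) [0..<2*D-1]"
  have cs_sorted: "sorted_wrt (<) cs"
    unfolding cs_def sorted_wrt_iff_nth_less by (auto simp: divide_strict_right_mono)
  have cs_bounds: "\<forall>c\<in>set cs. \<Phi> a0 < c \<and> c < \<Phi> b0"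
  proof
    fix c assume "c \<in> set cs"
    then obtain j where j: "j < 2*D - 1" "c = (real j + 1 - 2 * real D) * pi / 2"
      unfolding cs_def by auto
    have j1: "real j + 1 - 2 * real D \<ge> 1 - 2 * real D" by simp
    have j2: "real j + 1 - 2 * real D \<le> -1" using j(1) D1 by linarith
    define e where "e = (real j + 1 - 2 * real D) * pi"
    have ce: "c = e / 2" using j(2) unfolding e_def by simp
    have "(1 - 2 * real D) * pi \<le> e"
      unfolding e_def using j1 pi_gt_zero by (intro mult_right_mono) auto
    then have e1: "pi - 2 * (real D * pi) \<le> e" by (simp add: algebra_simps)
    have e2: "e \<le> -1 * pi"
      unfolding e_def using j2 pi_gt_zero by (intro mult_right_mono) auto
    show "\<Phi> a0 < c \<and> c < \<Phi> b0" unfolding ce using Pa Pb e1 e2 pi_gt_zero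
      by linarith
  qed
  obtain xs where xs: "length xs = length cs" "sorted_wrt (<) xs" "\<forall>j<length cs. \<Phi> (xs!j) = cs!j"
  proof -
    have "continuous_on UNIV \<Phi>"
      unfolding \<Phi>_def Th_def by (intro continuous_on_mult continuous_on_const Theta_cont)
    then show ?thesis using chain_ivt[of \<Phi> cs a0 b0] cs_sorted cs_bounds a0b0 that by blast
  qed
  show ?thesis
  proof (intro exI[of _ xs] conjI allI impI)
    show "length xs = 2 * D - 1" using xs unfolding cs_def by simp
    show "sorted_wrt (<) xs" by fact
  next
    fix i assume i: "i < length xs"
    have Pi: "\<Phi> (xs ! i) = of_int (int i + 1 - 2 * int D) * (pi / 2)"
      using xs i unfolding cs_def by simp
    have pol: "(\<Prod>z\<in>#Z. (complex_of_real (xs!i) - z)) =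
        complex_of_real (\<Prod>z\<in>#Z. cmod (complex_of_real (xs!i) - z)) * cis (Th (xs!i))"
      unfolding Th_def by (rule prod_polar[OF nz])
    have cTh: "cos (Th (xs!i)) = cos (\<Phi> (xs!i))" unfolding ThP s_def by simp
    have sTh: "sin (Th (xs!i)) = s * sin (\<Phi> (xs!i))" unfolding ThP s_def by simp
    {
      assume "even i"
      then have "odd (int i + 1 - 2 * int D)" by simp
      then have "cos (\<Phi> (xs ! i)) = 0" unfolding Pi cos_zero_iff_int by blast
      then show "Re (\<Prod>z\<in>#Z. (complex_of_real (xs!i) - z)) = 0"
        unfolding pol using cTh by simp
    }
    {
      assume "odd i"
      then have "even (int i + 1 - 2 * int D)" by simp
      then have "sin (\<Phi> (xs ! i)) = 0" unfolding Pi sin_zero_iff_int by blast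
      then show "Im (\<Prod>z\<in>#Z. (complex_of_real (xs!i) - z)) = 0"
        unfolding pol using sTh by simp
    }
  qed
qed

lemma sum_flip: "(\<Sum>k\<le>(n::nat). g k) = (\<Sum>l\<le>n. g (n - l))"
  by (rule sum.reindex_bij_witness[where i="\<lambda>i. n - i" and j="\<lambda>i. n - i"]) auto

lemma sum_parity:
  fixes g :: "nat \<Rightarrow> 'a::comm_monoid_add"
  shows "(\<Sum>l\<le>n. g l) = (\<Sum>j\<in>{j. 2*j \<le> n}. g (2*j)) + (\<Sum>j\<in>{j. 2*j+1 \<le> n}. g (2*j+1))"
proof -
  have fin1: "finite {j::nat. 2*j \<le> n}" by (rule finite_subset[of _ "{..n}"]) auto
  have fin2: "finite {j::nat. 2*j+1 \<le> n}" by (rule finite_subset[of _ "{..n}"]) auto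
  have U: "{..n} = (\<lambda>j. 2*j) ` {j. 2*j \<le> n} \<union> (\<lambda>j. 2*j+1) ` {j. 2*j+1 \<le> n}"
  proof (intro set_eqI iffI)
    fix l assume "l \<in> {..n}"
    then show "l \<in> (\<lambda>j. 2*j) ` {j. 2*j \<le> n} \<union> (\<lambda>j. 2*j+1) ` {j. 2*j+1 \<le> n}"
    proof (cases "even l")
      case True then obtain j where "l = 2*j" by blast
      with \<open>l \<in> {..n}\<close> show ?thesis by auto
    next
      case False then obtain j where "l = 2*j+1" using oddE by blast
      with \<open>l \<in> {..n}\<close> show ?thesis by auto
    qed
  qed auto
  have "(\<Sum>l\<le>n. g l) = (\<Sum>l\<in>(\<lambda>j. 2*j) ` {j. 2*j \<le> n}. g l) + (\<Sum>l\<in>(\<lambda>j. 2*j+1) ` {j. 2*j+1 \<le> n}. g l)"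
  proof -
    have "(\<lambda>j. 2*j) ` {j. 2*j \<le> n} \<inter> (\<lambda>j. 2*j+1) ` {j. 2*j+1 \<le> n} = {}"
      by auto presburger
    then show ?thesis unfolding U by (intro sum.union_disjoint) (use fin1 fin2 in auto)
  qed
  also have "\<dots> = (\<Sum>j\<in>{j. 2*j \<le> n}. g (2*j)) + (\<Sum>j\<in>{j. 2*j+1 \<le> n}. g (2*j+1))"
    by (subst (1 2) sum.reindex) (auto simp: inj_on_def)
  finally show ?thesis .
qed

lemma PQ_eval:
  fixes f :: "real poly"
  shows "complex_of_real (poly (P_poly f) x) - \<i> * complex_of_real (poly (Q_poly f) x) =
     (-\<i>) ^ degree f * poly (map_poly complex_of_real f) (\<i> * complex_of_real x)"
proof -
  define n where "n = degree f"
  define c where "c = (\<lambda>k. complex_of_real (coeff f k))"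
  have F: "poly (map_poly complex_of_real f) y = (\<Sum>k\<le>n. c k * y ^ k)" for y
    unfolding poly_altdef c_def n_def by (simp add: degree_map_poly coeff_map_poly)
  have "(-\<i>) ^ n * poly (map_poly complex_of_real f) (\<i> * complex_of_real x) =
      (\<Sum>k\<le>n. c k * ((-\<i>) ^ n * (\<i> * complex_of_real x) ^ k))"
    unfolding F by (simp add: sum_distrib_left mult_ac)
  also have "\<dots> = (\<Sum>k\<le>n. c k * (-\<i>) ^ (n - k) * complex_of_real x ^ k)"
  proof (intro sum.cong refl)
    fix k assume "k \<in> {..n}"
    then have p1: "(-\<i>) ^ n = (-\<i>) ^ (n - k) * (-\<i>) ^ k" by (simp add: power_add[symmetric])
    have p2: "(-\<i>) ^ k * \<i> ^ k = 1" by (simp add: power_mult_distrib[symmetric])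
    have "(-\<i>) ^ n * (\<i> * complex_of_real x) ^ k = (-\<i>) ^ (n - k) * ((-\<i>) ^ k * \<i> ^ k) * complex_of_real x ^ k"
      unfolding p1 power_mult_distrib by (simp only: mult_ac)
    then show "c k * ((-\<i>) ^ n * (\<i> * complex_of_real x) ^ k) = c k * (-\<i>) ^ (n - k) * complex_of_real x ^ k"
      unfolding p2 by simp
  qed
  also have "\<dots> = (\<Sum>l\<le>n. c (n - l) * (-\<i>) ^ l * complex_of_real x ^ (n - l))"
    by (subst sum_flip) (intro sum.cong refl, simp)
  also have "\<dots> = (\<Sum>j\<in>{j. 2*j \<le> n}. c (n - 2*j) * (-\<i>) ^ (2*j) * complex_of_real x ^ (n - 2*j)) +
                  (\<Sum>j\<in>{j. 2*j+1 \<le> n}. c (n - (2*j+1)) * (-\<i>) ^ (2*j+1) * complex_of_real x ^ (n - (2*j+1)))"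
    by (rule sum_parity)
  also have "\<dots> = (\<Sum>j\<in>{j. 2*j \<le> n}. complex_of_real ((-1)^j * coeff f (n - 2*j) * x ^ (n - 2*j))) -
                  \<i> * (\<Sum>j\<in>{j. 2*j+1 \<le> n}. complex_of_real ((-1)^j * coeff f (n - 2*j - 1) * x ^ (n - 2*j - 1)))"
  proof -
    have e: "(-\<i>) ^ (2*j) = (-1) ^ j" for j :: nat by (simp add: power_mult)
    have o: "(-\<i>) ^ (2*j+1) = - \<i> * (-1) ^ j" for j :: nat by (simp add: power_mult)
    show ?thesis
      unfolding e o c_def sum_distrib_left
      by (simp add: sum_negf[symmetric] mult_ac)
  qed
  also have "\<dots> = complex_of_real (poly (P_poly f) x) - \<i> * complex_of_real (poly (Q_poly f) x)"
    unfolding P_poly_def Q_poly_def Let_def n_def[symmetric] poly_sum poly_monom by simp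
  finally show ?thesis unfolding n_def by simp
qed

lemma poly_map_Re: "poly (map_poly Re p) x = Re (poly p (complex_of_real x))"
  by (induction p) (auto simp: map_poly_pCons)

lemma poly_map_mIm: "poly (map_poly (\<lambda>c. - Im c) p) x = - Im (poly p (complex_of_real x))"
  by (induction p) (auto simp: map_poly_pCons algebra_simps)

lemma roots_count_eq:
  assumes "f \<noteq> 0"
  shows "roots_count R f = size (filter_mset (\<lambda>w. R (Re w)) (proots (map_poly complex_of_real f)))"
proof -
  define F where "F = map_poly complex_of_real f"
  have F0: "F \<noteq> 0" using assms unfolding F_def by (auto simp: poly_eq_iff coeff_map_poly)
  define M where "M = filter_mset (\<lambda>w. R (Re w)) (proots F)"
  have sm: "set_mset M = {z. poly F z = 0 \<and> R (Re z)}" unfolding M_def using F0 by auto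
  have "size M = sum (count M) (set_mset M)" by (rule size_multiset_overloaded_eq)
  also have "\<dots> = (\<Sum>z\<in>{z. poly F z = 0 \<and> R (Re z)}. order z F)"
    unfolding sm by (intro sum.cong refl) (use F0 in \<open>auto simp: M_def\<close>)
  finally show ?thesis unfolding roots_count_def F_def M_def by simp
qed

lemma order_linprod:
  fixes T :: "real multiset"
  shows "(\<Prod>t\<in>#T. [:-t, 1:]) \<noteq> 0 \<and> order x (\<Prod>t\<in>#T. [:-t, 1:]) = count T x"
proof (induction T)
  case empty then show ?case by (simp add: order_0I)
next
  case (add t T)
  have o1: "order x [:-t, 1:] = (if x = t then 1 else 0)"
  proof (cases "x = t")
    case True then show ?thesis using order_power_n_n[of t 1] by simp
  next
    case False then show ?thesis by (simp add: order_0I)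
  qed
  have ne: "[:-t, 1:] * (\<Prod>t\<in>#T. [:-t, 1:]) \<noteq> 0"
    using add.IH by (metis mult_eq_0_iff pCons_eq_0_iff one_neq_zero)
  have "order x ([:-t, 1:] * (\<Prod>t\<in>#T. [:-t, 1:])) = order x [:-t, 1:] + order x (\<Prod>t\<in>#T. [:-t, 1:])"
    using ne by (rule order_mult)
  then show ?case using add.IH o1 ne by auto
qed

lemma monic_linprod:
  fixes B :: "complex multiset"
  shows "coeff (\<Prod>w\<in>#B. [:\<i> * w, 1:]) (size B) = 1 \<and> degree (\<Prod>w\<in>#B. [:\<i> * w, 1:]) = size B"
proof (induction B)
  case empty then show ?case by simp
next
  case (add w B)
  define G where "G = (\<Prod>w\<in>#B. [:\<i> * w, 1:])"
  have G0: "G \<noteq> 0" using add unfolding G_def by auto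
  have d: "degree ([:\<i> * w, 1:] * G) = 1 + size B"
    using add G0 unfolding G_def by (subst degree_mult_eq) auto
  have lG: "lead_coeff G = 1" using add unfolding G_def by simp
  have l: "lead_coeff ([:\<i> * w, 1:] * G) = 1"
    unfolding lead_coeff_mult lG by simp
  have e: "(\<Prod>w\<in>#add_mset w B. [:\<i> * w, 1:]) = [:\<i> * w, 1:] * G" unfolding G_def by simp
  show ?case unfolding e size_add_mset Suc_eq_plus1_left using l[unfolded d] d by blast
qed

lemma interlace_from_list:
  fixes L :: "real list"
  assumes "sorted L" "length L = 2 * d - 1" "d \<ge> 1"
  shows "length (evs L) = d \<and> length (ods L) = d - 1 \<and>
    (\<forall>i < d - 1. evs L ! i \<le> ods L ! i \<and> ods L ! i \<le> evs L ! (i + 1)) \<and>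
    (sorted_wrt (<) L \<longrightarrow> (\<forall>i < d - 1. evs L ! i < ods L ! i \<and> ods L ! i < evs L ! (i + 1)))"
proof -
  have le: "length (evs L) = d" "length (ods L) = d - 1"
    using evs_ods_length[of L] assms by auto
  have nth: "\<And>i. i < d \<Longrightarrow> evs L ! i = L ! (2*i)" "\<And>i. i < d - 1 \<Longrightarrow> ods L ! i = L ! (2*i+1)"
    using evs_ods_nth[of L] le by auto
  show ?thesis
  proof (intro conjI allI impI)
    fix i assume i: "i < d - 1"
    have "2*i+2 < length L" using i assms by linarith
    then show "evs L ! i \<le> ods L ! i" "ods L ! i \<le> evs L ! (i + 1)"
      using nth[of i] nth(2)[of i] nth(1)[of "i+1"] i assms(1)
      by (auto intro!: sorted_nth_mono)
  next
    fix i assume st: "sorted_wrt (<) L" and i: "i < d - 1"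
    have "2*i+2 < length L" using i assms by linarith
    then show "evs L ! i < ods L ! i" "ods L ! i < evs L ! (i + 1)"
      using nth[of i] nth(2)[of i] nth(1)[of "i+1"] i st
      by (auto simp: sorted_wrt_iff_nth_less)
  qed (use le in auto)
qed

lemma count_le_order:
  fixes p :: "real poly"
  assumes "distinct xs" "p \<noteq> 0" "\<forall>y\<in>set xs. poly p y = 0"
  shows "count (mset xs) x \<le> order x p"
proof (cases "x \<in> set xs")
  case True
  then have "order x p > 0" using assms order_gt_0_iff by blast
  moreover have "count (mset xs) x = 1" using True assms(1) distinct_count_atmost_1 by metis
  ultimately show ?thesis by simp
next
  case False
  then have "count (mset xs) x = 0" by (metis count_eq_zero_iff set_mset_mset)
  then show ?thesis by (metis le0)
qed

lemma combine:
  fixes P Q R P1 Q1 :: "real poly" and T :: "real multiset" and D n0 d :: nat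
  assumes PR: "P = R * P1" and QR: "Q = R * Q1" and R0: "R \<noteq> 0" and P10: "P1 \<noteq> 0"
    and ordR: "\<And>x. order x R = count T x" and sT: "size T = n0" and dd: "d = n0 + D"
    and L1ex: "D \<ge> 1 \<Longrightarrow> \<exists>L1::real list. length L1 = 2*D - 1 \<and> sorted_wrt (<) L1 \<and>
        (\<forall>i<length L1. (even i \<longrightarrow> poly P1 (L1!i) = 0) \<and> (odd i \<longrightarrow> poly Q1 (L1!i) = 0))"
  shows "\<exists>\<mu> \<nu> :: real list. length \<mu> = d \<and> length \<nu> = d - 1 \<and>
           roots_with_mult \<mu> P \<and> roots_with_mult \<nu> Q \<and>
           (\<forall>i < d - 1. \<mu> ! i \<le> \<nu> ! i \<and> \<nu> ! i \<le> \<mu> ! (i + 1)) \<and>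
           (n0 = 0 \<longrightarrow> (\<forall>i < d - 1. \<mu> ! i < \<nu> ! i \<and> \<nu> ! i < \<mu> ! (i + 1)))"
proof -
  have P0: "P \<noteq> 0" using PR R0 P10 by simp
  have ordP: "order x P = count T x + order x P1" for x
    using P0 unfolding PR by (subst order_mult) (auto simp: ordR)
  have ordQ: "Q1 \<noteq> 0 \<Longrightarrow> order x Q = count T x + order x Q1" for x
    using R0 unfolding QR by (subst order_mult) (auto simp: ordR)
  show ?thesis
  proof (cases "d = 0")
    case True
    then show ?thesis by (intro exI[of _ "[]"]) (auto simp: roots_with_mult_def)
  next
    case d1: False
    show ?thesis
    proof (cases "D = 0")
      case True
      then have "size T \<noteq> 0" using d1 dd sT by simp
      then obtain t0 T' where T: "T = add_mset t0 T'"
        by (metis multiset_cases size_empty)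
      obtain ts where ts: "mset ts = T'" using ex_mset by blast
      define L where "L = fold ins2 ts [t0]"
      have fL: "sorted L \<and> length L = 1 + 2 * length ts \<and> mset (evs L) = {#t0#} + T' \<and> mset (ods L) = T'"
        using fold_ins2[of "[t0]" ts] ts unfolding L_def by simp
      have lts: "length ts = size T'" using ts by auto
      have len: "length L = 2 * d - 1" using fL lts T sT dd True by simp
      have il: "length (evs L) = d \<and> length (ods L) = d - 1 \<and>
          (\<forall>i < d - 1. evs L ! i \<le> ods L ! i \<and> ods L ! i \<le> evs L ! (i + 1))"
        using interlace_from_list[of L d] fL len d1 by auto
      have rP: "roots_with_mult (evs L) P"
        unfolding roots_with_mult_def using fL T ordP by auto
      have rQ: "roots_with_mult (ods L) Q"
      proof (cases "Q1 = 0")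
        case True then show ?thesis unfolding roots_with_mult_def QR by simp
      next
        case False
        then show ?thesis unfolding roots_with_mult_def using fL T ordQ[OF False]
          by (auto simp: le_SucI)
      qed
      have "n0 \<noteq> 0" using d1 dd True by simp
      then show ?thesis using il rP rQ by blast
    next
      case False
      then obtain L1 where L1: "length L1 = 2*D - 1" "sorted_wrt (<) L1"
        "\<forall>i<length L1. (even i \<longrightarrow> poly P1 (L1!i) = 0) \<and> (odd i \<longrightarrow> poly Q1 (L1!i) = 0)"
        using L1ex by auto
      obtain ts where ts: "mset ts = T" using ex_mset by blast
      define L where "L = fold ins2 ts L1"
      have sL1: "sorted L1" "distinct L1" using L1(2) strict_sorted_iff by auto
      have fL: "sorted L \<and> length L = length L1 + 2 * length ts \<and> mset (evs L) = mset (evs L1) + T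
          \<and> mset (ods L) = mset (ods L1) + T"
        using fold_ins2[OF sL1(1), of ts] ts unfolding L_def by simp
      have lts: "length ts = size T" using ts by auto
      have len: "length L = 2 * d - 1" using fL lts sT dd False L1(1) by simp
      have il: "length (evs L) = d \<and> length (ods L) = d - 1 \<and>
          (\<forall>i < d - 1. evs L ! i \<le> ods L ! i \<and> ods L ! i \<le> evs L ! (i + 1)) \<and>
          (sorted_wrt (<) L \<longrightarrow> (\<forall>i < d - 1. evs L ! i < ods L ! i \<and> ods L ! i < evs L ! (i + 1)))"
        using interlace_from_list[of L d] fL len d1 by auto
      have dist: "distinct (evs L1)" "distinct (ods L1)" using evs_ods_distinct[OF sL1(2)] by auto
      have rootsE: "\<forall>y\<in>set (evs L1). poly P1 y = 0"
      proof
        fix y assume "y \<in> set (evs L1)"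
        then obtain i where i: "i < length (evs L1)" "y = evs L1 ! i" by (metis in_set_conv_nth)
        have "y = L1 ! (2*i)" "2*i < length L1" using evs_ods_nth[of L1] evs_ods_length[of L1] i by auto
        then show "poly P1 y = 0" using L1(3) by auto
      qed
      have rootsO: "\<forall>y\<in>set (ods L1). poly Q1 y = 0"
      proof
        fix y assume "y \<in> set (ods L1)"
        then obtain i where i: "i < length (ods L1)" "y = ods L1 ! i" by (metis in_set_conv_nth)
        have "y = L1 ! (2*i+1)" "2*i+1 < length L1" using evs_ods_nth[of L1] evs_ods_length[of L1] i by auto
        then show "poly Q1 y = 0" using L1(3) by auto
      qed
      have rP: "roots_with_mult (evs L) P"
        unfolding roots_with_mult_def
      proof (intro disjI2 allI)
        fix x
        have "count (mset (evs L1)) x \<le> order x P1" by (rule count_le_order[OF dist(1) P10 rootsE])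
        then show "count (mset (evs L)) x \<le> order x P" using fL ordP by simp
      qed
      have rQ: "roots_with_mult (ods L) Q"
      proof (cases "Q1 = 0")
        case True then show ?thesis unfolding roots_with_mult_def QR by simp
      next
        case Q10: False
        show ?thesis unfolding roots_with_mult_def
        proof (intro disjI2 allI)
          fix x
          have "count (mset (ods L1)) x \<le> order x Q1" by (rule count_le_order[OF dist(2) Q10 rootsO])
          then show "count (mset (ods L)) x \<le> order x Q" using fL ordQ[OF Q10] by simp
        qed
      qed
      have strict: "n0 = 0 \<Longrightarrow> sorted_wrt (<) L"
      proof -
        assume "n0 = 0"
        then have "ts = []" using sT ts by auto
        then show "sorted_wrt (<) L" using L1(2) unfolding L_def by simp
      qed
      show ?thesis using il rP rQ strict by blast
    qed
  qed
qed

lemma shift_prod: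
  "(-\<i>) ^ (size W) * (\<Prod>w\<in>#W. (\<i> * y - w)) = (\<Prod>w\<in>#W. (y + \<i> * w))"
proof (induction W)
  case empty then show ?case by simp
next
  case (add w W)
  have e: "(-\<i>) * (\<i> * y - w) = y + \<i> * w"
    by (simp add: right_diff_distrib mult.assoc[symmetric])
  have "(-\<i>) ^ (size (add_mset w W)) * (\<Prod>w\<in>#add_mset w W. (\<i> * y - w)) =
        ((-\<i>) * (\<i> * y - w)) * ((-\<i>) ^ (size W) * (\<Prod>w\<in>#W. (\<i> * y - w)))"
    by (simp add: mult_ac)
  also have "\<dots> = (\<Prod>w\<in>#add_mset w W. (y + \<i> * w))" unfolding e add.IH by simp
  finally show ?case .
qed

lemma real_part_prod:
  assumes "\<forall>w\<in>#A. Re w = 0"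
  shows "(\<Prod>w\<in>#A. (complex_of_real x + \<i> * w)) = complex_of_real (poly (\<Prod>t\<in>#image_mset Im A. [:-t, 1:]) x)"
  using assms
proof (induction A)
  case empty then show ?case by simp
next
  case (add w A)
  have "complex_of_real x + \<i> * w = complex_of_real (x - Im w)"
    using add.prems by (simp add: complex_eq_iff)
  then show ?case using add by (simp add: left_diff_distrib)
qed

lemma split_nz: "filter_mset (\<lambda>w. Re w \<noteq> 0) W = filter_mset (\<lambda>w. Re w > 0) W + filter_mset (\<lambda>w. Re w < 0) W"
  by (induction W) auto

lemma count_upper: "size (filter_mset (\<lambda>z. Im z > 0) (image_mset (\<lambda>w. -\<i>*w) (filter_mset (\<lambda>w. Re w \<noteq> 0) W)))
   = size (filter_mset (\<lambda>w. Re w < 0) W)"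
  by (induction W) auto

lemma count_lower: "size (filter_mset (\<lambda>z. Im z < 0) (image_mset (\<lambda>w. -\<i>*w) (filter_mset (\<lambda>w. Re w \<noteq> 0) W)))
   = size (filter_mset (\<lambda>w. Re w > 0) W)"
  by (induction W) auto

theorem corollary3p3:
  fixes f :: "real poly"
  assumes monic: "lead_coeff f = 1"
    and n0_lt: "n_zero f < degree f"
  defines "d \<equiv> degree f - 2 * min (n_pos f) (n_neg f)"
  shows "\<exists>\<mu> \<nu> :: real list.
           length \<mu> = d \<and> length \<nu> = d - 1 \<and>
           roots_with_mult \<mu> (P_poly f) \<and> roots_with_mult \<nu> (Q_poly f) \<and>
           (\<forall>i < d - 1. \<mu> ! i \<le> \<nu> ! i \<and> \<nu> ! i \<le> \<mu> ! (i + 1)) \<and>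
           (n_zero f = 0 \<longrightarrow> (\<forall>i < d - 1. \<mu> ! i < \<nu> ! i \<and> \<nu> ! i < \<mu> ! (i + 1)))"
proof -
  define n where "n = degree f"
  have f0: "f \<noteq> 0" using monic by auto
  define F where "F = map_poly complex_of_real f"
  have F0: "F \<noteq> 0" using f0 unfolding F_def by (auto simp: poly_eq_iff coeff_map_poly)
  have degF: "degree F = n" unfolding F_def n_def by (simp add: degree_map_poly)
  have lcF: "lead_coeff F = 1" using monic degF unfolding F_def n_def by (simp add: coeff_map_poly)
  define W where "W = proots F"
  have Fdec: "F = (\<Prod>w\<in>#W. [:-w, 1:])"
    using complex_poly_decompose_multiset[of F] lcF unfolding W_def by simp
  have sW: "size W = n" using size_proots_complex[of F] degF unfolding W_def by simp
  have cnt: "roots_count R f = size (filter_mset (\<lambda>w. R (Re w)) W)" for R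
    using roots_count_eq[OF f0] unfolding W_def F_def by simp
  define A where "A = filter_mset (\<lambda>w. Re w = 0) W"
  define B where "B = filter_mset (\<lambda>w. Re w \<noteq> 0) W"
  have WAB: "W = A + B" unfolding A_def B_def by (rule multiset_partition)
  define k where "k = n_neg f"
  define m where "m = n_pos f"
  have n0: "n_zero f = size A" using cnt[of "\<lambda>r. r = 0"] unfolding A_def by simp
  have kk: "k = size (filter_mset (\<lambda>w. Re w < 0) W)" using cnt[of "\<lambda>r. r < 0"] unfolding k_def by simp
  have mm: "m = size (filter_mset (\<lambda>w. Re w > 0) W)" using cnt[of "\<lambda>r. r > 0"] unfolding m_def by simp
  have sB: "size B = m + k" unfolding B_def split_nz kk mm by simp
  have nsum: "n = size A + m + k" using sW WAB sB by simp
  define Z where "Z = image_mset (\<lambda>w. -\<i>*w) B"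
  have nz: "\<forall>z\<in>#Z. Im z \<noteq> 0" unfolding Z_def B_def by auto
  have kZ: "k = size (filter_mset (\<lambda>z. Im z > 0) Z)" unfolding Z_def B_def kk by (rule count_upper[symmetric])
  have mZ: "m = size (filter_mset (\<lambda>z. Im z < 0) Z)" unfolding Z_def B_def mm by (rule count_lower[symmetric])
  define D where "D = (if m \<le> k then k - m else m - k)"
  define T where "T = image_mset Im A"
  define R where "R = (\<Prod>t\<in>#T. [:-t, 1:])"
  define G1 where "G1 = (\<Prod>w\<in>#B. [:\<i>*w, 1:])"
  define P1 where "P1 = map_poly Re G1"
  define Q1 where "Q1 = map_poly (\<lambda>c. - Im c) G1"
  have G1Z: "poly G1 (complex_of_real x) = (\<Prod>z\<in>#Z. (complex_of_real x - z))" for x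
    unfolding G1_def Z_def poly_prod_mset by (simp add: image_mset.compositionality o_def add.commute)
  have key: "complex_of_real (poly (P_poly f) x) - \<i> * complex_of_real (poly (Q_poly f) x) =
     complex_of_real (poly R x) * poly G1 (complex_of_real x)" for x
  proof -
    have "poly F (\<i> * complex_of_real x) = (\<Prod>w\<in>#W. (\<i> * complex_of_real x - w))"
      by (subst Fdec) (simp add: poly_prod_mset)
    then have "(-\<i>) ^ n * poly F (\<i> * complex_of_real x) = (\<Prod>w\<in>#W. (complex_of_real x + \<i> * w))"
      using shift_prod[of W "complex_of_real x"] sW by simp
    also have "\<dots> = (\<Prod>w\<in>#A. (complex_of_real x + \<i> * w)) * (\<Prod>w\<in>#B. (complex_of_real x + \<i> * w))"
      unfolding WAB by simp
    also have "(\<Prod>w\<in>#A. (complex_of_real x + \<i> * w)) = complex_of_real (poly R x)"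
      unfolding R_def T_def by (rule real_part_prod) (auto simp: A_def)
    also have "(\<Prod>w\<in>#B. (complex_of_real x + \<i> * w)) = poly G1 (complex_of_real x)"
      unfolding G1_def poly_prod_mset by (simp add: add.commute)
    finally show ?thesis using PQ_eval[of f x] unfolding F_def n_def by simp
  qed
  have PR: "P_poly f = R * P1"
  proof (rule poly_ext)
    fix x
    have "Re (complex_of_real (poly (P_poly f) x) - \<i> * complex_of_real (poly (Q_poly f) x)) =
          Re (complex_of_real (poly R x) * poly G1 (complex_of_real x))" using key by simp
    then show "poly (P_poly f) x = poly (R * P1) x" unfolding P1_def by (simp add: poly_map_Re)
  qed
  have QR: "Q_poly f = R * Q1"
  proof (rule poly_ext)
    fix x
    have "Im (complex_of_real (poly (P_poly f) x) - \<i> * complex_of_real (poly (Q_poly f) x)) =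
          Im (complex_of_real (poly R x) * poly G1 (complex_of_real x))" using key by simp
    then show "poly (Q_poly f) x = poly (R * Q1) x" unfolding Q1_def by (simp add: poly_map_mIm)
  qed
  have R0: "R \<noteq> 0" and ordR: "\<And>x. order x R = count T x"
    using order_linprod[of T] unfolding R_def by auto
  have P10: "P1 \<noteq> 0"
  proof
    assume "P1 = 0"
    then have "coeff P1 (size B) = 0" by simp
    moreover have "coeff P1 (size B) = 1"
      unfolding P1_def using monic_linprod[of B] by (simp add: coeff_map_poly G1_def)
    ultimately show False by simp
  qed
  have sT: "size T = n_zero f" unfolding T_def n0 by simp
  have dd: "d = n_zero f + D" unfolding d_def D_def n_def[symmetric] nsum n0 k_def[symmetric] m_def[symmetric]
    by auto
  have L1ex: "\<exists>L1::real list. length L1 = 2*D - 1 \<and> sorted_wrt (<) L1 \<and>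
        (\<forall>i<length L1. (even i \<longrightarrow> poly P1 (L1!i) = 0) \<and> (odd i \<longrightarrow> poly Q1 (L1!i) = 0))" if D1: "D \<ge> 1"
  proof -
    obtain L where L: "length L = 2*D - 1" "sorted_wrt (<) L"
      "\<forall>i<length L. (even i \<longrightarrow> Re (\<Prod>z\<in>#Z. (complex_of_real (L!i) - z)) = 0) \<and>
                   (odd i \<longrightarrow> Im (\<Prod>z\<in>#Z. (complex_of_real (L!i) - z)) = 0)"
      using core[OF nz kZ mZ D_def D1] by blast
    show ?thesis
      using L unfolding P1_def Q1_def poly_map_Re poly_map_mIm G1Z by auto
  qed
  show ?thesis
    using combine[OF PR QR R0 P10 ordR sT dd L1ex] by blast
qed

end
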